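(* For all integers $n,m\ge0$, $$\sum_{k=0}^n\binom{n}{k}H_k(m)=\sum_{j=0}^m\binom{m}{j}\sum_{k=0}^nH_k(j)(-1)^{n-k}2^k\frac{(m-j)!}{(n-k)!}s(n-k,m-j).$$ In particular, $\sum_{k=0}^n\binom{n}{k}H_k=2^n\left(H_n-\sum_{k=1}^n\frac{1}{2^kk}\right)$.
   Context: For integers $m\ge 1$, $n\ge 0$, the multiple harmonic-like numbers are $H_n(m)=\sum_{1\le k_1+k_2+\cdots+k_m\le n}\frac{1}{k_1k_2\cdots k_m}$ (sum over positive integers $k_1,\dots,k_m$), with $H_n(0)=1$ for $n\ge 0$ and $H_0(m)=0$ for $m\ge1$. Equivalently, $\sum_{n\ge0}H_n(m)z^n=\frac{(-\ln(1-z))^m}{1-z}$. $H_n=H_n(1)=\sum_{k=1}^n\frac1k$. The (signed) Stirling numbers of the first kind $s(n,k)$ are defined by $\sum_{n\ge k}s(n,k)\frac{z^n}{n!}=\frac{\ln^k(1+z)}{k!}$, with $s(n,k)=0$ for $n<k$. *)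

theory Defs
  imports "HOL-Analysis.Analysis" "HOL-Combinatorics.Stirling"
begin

text \<open>For m = 0 the only tuple is the empty
  one, giving H_n(0) = 1; for n = 0, m \<ge> 1 the sum is empty, giving 0.\<close>
definition mhn :: "nat \<Rightarrow> nat \<Rightarrow> real" where
  "mhn n m = (\<Sum>k \<in> {k \<in> PiE {1..m} (\<lambda>_. {1..n}). (\<Sum>i=1..m. k i) \<le> n}.
                 1 / (\<Prod>i=1..m. real (k i)))"

definition stirling1s :: "nat \<Rightarrow> nat \<Rightarrow> int" where
  "stirling1s n k = (-1) ^ (n - k) * int (stirling n k)"

end

theory Submission imports Defs "HOL-Computational_Algebra.Formal_Power_Series"
begin
unbundle no vec_syntax
notation fps_nth (infixl \<open>$\<close> 75)

definition GG :: "real fps" where "GG = Abs_fps (\<lambda>_. 1)"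
definition LL :: "real fps" where "LL = Abs_fps (\<lambda>n. if n = 0 then 0 else 1 / real n)"
definition Sc :: "real fps \<Rightarrow> real fps" where "Sc f = Abs_fps (\<lambda>n. 2^n * f$n)"
definition WW :: "real fps" where "WW = fps_X * GG"

lemma GG_nth[simp]: "GG $ n = 1" by (simp add: GG_def)
lemma LL_nth: "LL $ n = (if n = 0 then 0 else 1 / real n)" by (simp add: LL_def)
lemma Sc_nth[simp]: "Sc f $ n = 2^n * f $ n" by (simp add: Sc_def)
lemma WW_0[simp]: "WW $ 0 = 0" by (simp add: WW_def)

lemma GG_inv: "(1 - fps_X) * GG = 1"
  by (simp add: fps_eq_iff algebra_simps fps_X_mult_nth)

lemma Sc_mult: "Sc (f * g) = Sc f * Sc g"
proof (rule fps_ext)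
  fix n
  have "Sc (f * g) $ n = (\<Sum>i=0..n. 2^n * (f$i * g$(n-i)))"
    by (simp add: fps_mult_nth sum_distrib_left)
  also have "\<dots> = (\<Sum>i=0..n. (2^i * f$i) * (2^(n-i) * g$(n-i)))"
    by (rule sum.cong) (auto simp: power_add[symmetric])
  finally show "Sc (f * g) $ n = (Sc f * Sc g) $ n" by (simp add: fps_mult_nth)
qed

lemma Sc_1[simp]: "Sc 1 = 1" by (simp add: fps_eq_iff)
lemma Sc_add: "Sc (f + g) = Sc f + Sc g" by (simp add: fps_eq_iff algebra_simps)
lemma Sc_diff: "Sc (f - g) = Sc f - Sc g" by (simp add: fps_eq_iff algebra_simps)
lemma Sc_power: "Sc (f ^ k) = Sc f ^ k" by (induct k) (simp_all add: Sc_mult)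
lemma Sc_X: "Sc fps_X = fps_const 2 * fps_X" by (auto simp: fps_eq_iff fps_X_def)

lemma GG_sq: "GG * GG = Abs_fps (\<lambda>n. real (n+1))"
  by (simp add: fps_eq_iff fps_mult_nth)

lemma deriv_GG: "fps_deriv GG = GG * GG"
  by (simp add: fps_eq_iff fps_mult_nth)

lemma deriv_LL: "fps_deriv LL = GG"
  by (simp add: fps_eq_iff LL_nth del: of_nat_Suc)

lemma GG_X: "1 + fps_X * GG = GG"
  using GG_inv by (simp add: algebra_simps)

lemma deriv_WW: "fps_deriv WW = GG * GG"
proof -
  have "fps_deriv WW = GG + fps_X * (GG * GG)" by (simp add: WW_def deriv_GG)
  also have "\<dots> = (1 + fps_X * GG) * GG" by (simp add: algebra_simps)
  finally show ?thesis by (simp add: GG_X)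
qed

lemma one_minus_WW: "1 - WW = GG * (1 - fps_const 2 * fps_X)"
proof -
  have "GG * (1 - fps_const 2 * fps_X) = (1 - fps_X) * GG - fps_X * GG"
    by (simp add: algebra_simps fps_const_add[symmetric])
  then show ?thesis by (simp add: GG_inv WW_def)
qed

lemma ScGG_inv: "Sc GG * (1 - fps_const 2 * fps_X) = 1"
proof -
  have "Sc ((1 - fps_X) * GG) = 1" by (simp add: GG_inv)
  then show ?thesis by (simp add: Sc_mult Sc_diff Sc_X mult.commute)
qed

lemma GG_comp: "GG * (GG oo WW) = Sc GG"
proof -
  have "((1 - fps_X) * GG) oo WW = 1" by (simp add: GG_inv)
  then have h: "(1 - WW) * (GG oo WW) = 1"
    by (simp add: fps_compose_mult_distrib fps_compose_sub_distrib)
  have "Sc GG = Sc GG * ((1 - WW) * (GG oo WW))" by (simp add: h)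
  also have "\<dots> = (Sc GG * (1 - fps_const 2 * fps_X)) * (GG * (GG oo WW))"
    by (simp add: one_minus_WW algebra_simps)
  finally show ?thesis by (simp add: ScGG_inv)
qed

lemma geo: "(\<Sum>i=0..n. (2::real)^i) = 2^(n+1) - 1"
  by (induct n) simp_all

lemma ScGG_GG: "Sc GG * GG = fps_const 2 * Sc GG - GG"
proof (rule fps_ext)
  fix n
  have "(Sc GG * GG)$n = 2^(n+1)-1" by (simp add: fps_mult_nth geo)
  moreover have "(fps_const 2 * Sc GG - GG)$n = 2^(n+1)-1"
    by (simp only: fps_sub_nth fps_mult_left_const_nth Sc_nth GG_nth) simp
  ultimately show "(Sc GG * GG)$n = (fps_const 2 * Sc GG - GG)$n" by simp
qed

lemma LL_comp: "LL oo WW = Sc LL - LL"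
proof -
  have "fps_deriv (LL oo WW) = (GG oo WW) * (GG * GG)"
    by (simp add: fps_compose_deriv deriv_LL deriv_WW)
  also have "\<dots> = Sc GG * GG" using GG_comp by (simp add: algebra_simps)
  also have "\<dots> = fps_deriv (Sc LL - LL)"
    by (simp add: ScGG_GG deriv_LL fps_eq_iff LL_nth del: of_nat_Suc)
  finally have "fps_deriv (LL oo WW) = fps_deriv (Sc LL - LL)" .
  then show ?thesis unfolding fps_deriv_eq_iff by (simp add: LL_nth)
qed

lemma sum_choose_aux: "(\<Sum>t=0..j. ((t+k) choose k)) = (j+k+1) choose (k+1)"
proof (induct j)
  case 0 then show ?case by simp
next
  case (Suc j)
  have "(\<Sum>t=0..Suc j. ((t+k) choose k)) = ((j+k+1) choose (k+1)) + ((Suc j + k) choose k)"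
    using Suc by simp
  also have "\<dots> = (Suc j+k+1) choose (k+1)" by simp
  finally show ?case .
qed

lemma GG_power: "(GG^(Suc k))$j = real ((j+k) choose k)"
proof (induct k arbitrary: j)
  case 0 then show ?case by simp
next
  case (Suc k)
  have "(GG^(Suc (Suc k)))$j = (GG * GG^(Suc k))$j" by (simp only: power_Suc)
  also have "\<dots> = (\<Sum>i=0..j. GG$i * (GG^(Suc k))$(j-i))" by (rule fps_mult_nth)
  also have "\<dots> = (\<Sum>i=0..j. real ((j-i+k) choose k))" by (simp only: Suc GG_nth mult_1_left)
  also have "\<dots> = (\<Sum>i=0..j. real ((i+k) choose k))"
    by (subst sum.atLeastAtMost_rev) simp
  also have "\<dots> = real ((j+k+1) choose (k+1))"
    by (simp only: of_nat_sum[symmetric] sum_choose_aux)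
  finally show ?case by simp
qed

lemma GG_WW_pow: "(GG * WW^k)$n = real (n choose k)"
proof -
  have "GG * WW^k = fps_X^k * GG^(Suc k)" by (simp add: WW_def power_mult_distrib algebra_simps)
  then show ?thesis by (simp add: fps_X_power_mult_nth GG_power del: power_Suc)
qed

lemma WW_pow_nth: "i < k \<Longrightarrow> (WW^k)$i = 0"
  by (simp add: WW_def power_mult_distrib fps_X_power_mult_nth)

lemma T_nth: "(GG * (f oo WW))$n = (\<Sum>k=0..n. real (n choose k) * f$k)"
proof -
  have "(GG * (f oo WW))$n = ((f oo WW) * GG)$n" by (simp add: mult.commute)
  also have "\<dots> = (\<Sum>i=0..n. \<Sum>j=0..i. f$j * (WW^j)$i)"
    by (simp add: fps_mult_nth fps_compose_nth)
  also have "\<dots> = (\<Sum>i=0..n. \<Sum>j=0..n. f$j * (WW^j)$i)"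
    by (rule sum.cong[OF refl], rule sum.mono_neutral_left) (auto simp: WW_pow_nth)
  also have "\<dots> = (\<Sum>j=0..n. f$j * (\<Sum>i=0..n. (WW^j)$i))"
    by (subst sum.swap) (simp add: sum_distrib_left)
  also have "\<dots> = (\<Sum>j=0..n. f$j * (WW^j * GG)$n)"
    by (simp only: fps_mult_nth GG_nth mult_1_right)
  also have "\<dots> = (\<Sum>j=0..n. f$j * (GG * WW^j)$n)"
    by (simp only: mult.commute[of _ GG])
  finally show ?thesis by (simp add: GG_WW_pow mult.commute)
qed

lemma mhn_0: "mhn n 0 = 1"
  by (simp add: mhn_def)

lemma mhn_alt:
  assumes "n \<le> N"
  shows "mhn n m = (\<Sum>k \<in> PiE {1..m} (\<lambda>_. {1..N}).
     if (\<Sum>i=1..m. k i) \<le> n then 1 / (\<Prod>i=1..m. real (k i)) else 0)"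
proof -
  have eq: "{k \<in> PiE {1..m} (\<lambda>_. {1..n}). (\<Sum>i=1..m. k i) \<le> n}
      = {k \<in> PiE {1..m} (\<lambda>_. {1..N}). (\<Sum>i=1..m. k i) \<le> n}"
  proof (intro equalityI subsetI)
    fix k assume "k \<in> {k \<in> PiE {1..m} (\<lambda>_. {1..n}). (\<Sum>i=1..m. k i) \<le> n}"
    then show "k \<in> {k \<in> PiE {1..m} (\<lambda>_. {1..N}). (\<Sum>i=1..m. k i) \<le> n}"
      using assms by (auto simp: PiE_iff)
  next
    fix k assume k: "k \<in> {k \<in> PiE {1..m} (\<lambda>_. {1..N}). (\<Sum>i=1..m. k i) \<le> n}"
    have "k i \<le> n" if "i \<in> {1..m}" for i
    proof -
      have "k i \<le> (\<Sum>i=1..m. k i)" by (rule member_le_sum) (use that in auto)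
      then show ?thesis using k by simp
    qed
    then show "k \<in> {k \<in> PiE {1..m} (\<lambda>_. {1..n}). (\<Sum>i=1..m. k i) \<le> n}"
      using k by (auto simp: PiE_iff)
  qed
  show ?thesis unfolding mhn_def eq
    by (rule sum.inter_filter) (simp add: finite_PiE)
qed

lemma mhn_Suc: "mhn n (Suc m) = (\<Sum>t=1..n. (1 / real t) * mhn (n-t) m)"
proof -
  define F where "F = (\<lambda>m (k::nat\<Rightarrow>nat) (n::nat).
     if (\<Sum>i=1..m. k i) \<le> n then 1 / (\<Prod>i=1..m. real (k i)) else 0)"
  have ins: "{1..Suc m} = insert (Suc m) {1..m}" by auto
  have "mhn n (Suc m) = (\<Sum>k \<in> PiE {1..Suc m} (\<lambda>_. {1..n}). F (Suc m) k n)"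
    unfolding F_def by (rule mhn_alt) simp
  also have "\<dots> = (\<Sum>k \<in> (\<lambda>(y, g). g(Suc m := y)) ` ({1..n} \<times> PiE {1..m} (\<lambda>_. {1..n})). F (Suc m) k n)"
    by (simp only: ins PiE_insert_eq)
  also have "\<dots> = (\<Sum>p \<in> {1..n} \<times> PiE {1..m} (\<lambda>_. {1..n}). F (Suc m) ((\<lambda>(y, g). g(Suc m := y)) p) n)"
    by (rule sum.reindex[unfolded comp_def]) (rule inj_combinator, simp)
  also have "\<dots> = (\<Sum>(t,g) \<in> {1..n} \<times> PiE {1..m} (\<lambda>_. {1..n}). F (Suc m) (g(Suc m := t)) n)"
    by (intro sum.cong refl) auto
  also have "\<dots> = (\<Sum>t=1..n. \<Sum>g \<in> PiE {1..m} (\<lambda>_. {1..n}). F (Suc m) (g(Suc m := t)) n)"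
    by (simp add: sum.cartesian_product)
  also have "\<dots> = (\<Sum>t=1..n. \<Sum>g \<in> PiE {1..m} (\<lambda>_. {1..n}). (1 / real t) * F m g (n - t))"
  proof (intro sum.cong refl)
    fix t g assume t: "t \<in> {1..n}" and g: "g \<in> PiE {1..m} (\<lambda>_. {1..n})"
    have s: "(\<Sum>i=1..Suc m. (g(Suc m := t)) i) = (\<Sum>i=1..m. g i) + t"
      by (simp add: ins)
    have p: "(\<Prod>i=1..Suc m. real ((g(Suc m := t)) i)) = real t * (\<Prod>i=1..m. real (g i))"
      by (simp add: ins)
    show "F (Suc m) (g(Suc m := t)) n = (1 / real t) * F m g (n - t)"
      unfolding F_def s p using t by auto
  qed
  also have "\<dots> = (\<Sum>t=1..n. (1 / real t) * mhn (n - t) m)"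
    by (intro sum.cong refl) (simp add: sum_distrib_left[symmetric] sum_divide_distrib F_def mhn_alt[of "n - _" n])
  finally show ?thesis .
qed

lemma A_eq: "Abs_fps (\<lambda>n. mhn n m) = GG * LL^m"
proof (induct m)
  case 0 then show ?case by (simp add: fps_eq_iff mhn_0)
next
  case (Suc m)
  show ?case
  proof (rule fps_ext)
    fix n
    have "(GG * LL^Suc m)$n = (LL * Abs_fps (\<lambda>n. mhn n m))$n"
      by (simp add: Suc algebra_simps)
    also have "\<dots> = (\<Sum>t=0..n. LL$t * mhn (n-t) m)" by (simp add: fps_mult_nth)
    also have "\<dots> = (\<Sum>t=1..n. (1 / real t) * mhn (n-t) m)"
      by (simp add: sum.atLeast_Suc_atMost LL_nth)
    finally show "Abs_fps (\<lambda>n. mhn n (Suc m)) $ n = (GG * LL ^ Suc m) $ n"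
      by (simp add: mhn_Suc)
  qed
qed

lemma LL_0[simp]: "LL $ 0 = 0" by (simp add: LL_nth)

lemma arith: "(F::real) \<noteq> 0 \<Longrightarrow> q + 1 \<noteq> 0 \<Longrightarrow>
  ((1+r)*(R*x1/F) + q*((1+r)*R*x2/F))/(1+q) = ((1+r)*R)*(q*x2+x1)/((1+q)*F)"
proof -
  assume F: "F \<noteq> 0"
  have "(1+r)*(R*x1/F) + q*((1+r)*R*x2/F) = ((1+r)*R)*(q*x2+x1)/F"
    using F by (simp add: field_simps)
  then show ?thesis by (simp add: mult.commute)
qed

lemma LL_pow: "(LL^r)$p = fact r * real (stirling p r) / fact p"
proof (induct r arbitrary: p)
  case 0 then show ?case by (cases p) simp_all
next
  case (Suc r)
  note IHr = Suc.hyps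
  define c where "c = (\<lambda>p. (LL^Suc r)$p)"
  define D where "D = fps_deriv (LL^Suc r)"
  have E: "(1 - fps_X) * D = of_nat (Suc r) * LL^r"
    unfolding D_def
    by (simp only: fps_deriv_power' deriv_LL diff_Suc_1) (metis GG_inv mult.assoc mult.commute mult.left_neutral)
  have key: "real (p+1) * c (p+1) - real p * c p = real (Suc r) * (LL^r)$p" for p
  proof -
    have "((1 - fps_X) * D)$p = D$p - (fps_X * D)$p"
      by (simp only: left_diff_distrib mult_1_left fps_sub_nth)
    moreover have "D$p = real (p+1) * c (p+1)" by (simp only: D_def c_def fps_deriv_nth)
    moreover have "(fps_X * D)$p = real p * c p"
    proof (cases p)
      case 0 then show ?thesis by simp
    next
      case (Suc q) then show ?thesis by (simp only: fps_X_mult_nth D_def c_def fps_deriv_nth) simp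
    qed
    moreover have "((of_nat (Suc r) * LL^r) :: real fps)$p = real (Suc r) * (LL^r)$p"
      by (rule fps_mult_of_nat_nth)
    ultimately show ?thesis using E by simp
  qed
  show ?case unfolding c_def[symmetric]
  proof (induct p)
    case 0 then show ?case by (simp add: c_def fps_nth_power_0)
  next
    case (Suc p)
    have "real (p+1) * c (p+1) = real (Suc r) * (LL^r)$p + real p * c p"
      using key[of p] by simp
    also have "\<dots> = real (Suc r) * (fact r * real (stirling p r) / fact p)
         + real p * (fact (Suc r) * real (stirling p (Suc r)) / fact p)"
      by (simp only: IHr Suc.hyps)
    finally have h: "real (p+1) * c (p+1) = real (Suc r) * (fact r * real (stirling p r) / fact p)
         + real p * (fact (Suc r) * real (stirling p (Suc r)) / fact p)" .
    have fs: "fact (Suc p) = real (p+1) * fact p" "fact (Suc r) = real (r+1) * (fact r :: real)"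
      by simp_all
    have st: "real (stirling (Suc p) (Suc r)) = real p * real (stirling p (Suc r)) + real (stirling p r)"
      by simp
    have pos: "real (p+1) \<noteq> 0" "(fact p :: real) \<noteq> 0" by simp_all
    have c1: "c (Suc p) = (real (Suc r) * (fact r * real (stirling p r) / fact p)
         + real p * (fact (Suc r) * real (stirling p (Suc r)) / fact p)) / real (p+1)"
      using h pos(1) by (simp add: eq_divide_eq mult.commute)
    have "c (Suc p) = fact (Suc r) * real (stirling (Suc p) (Suc r)) / fact (Suc p)"
      unfolding st fs c1 using arith[of "fact p" "real p" "real r" "fact r" "real (stirling p r)" "real (stirling p (Suc r))"] pos by simp
    then show ?case by simp
  qed
qed


lemma sign_st: "(-1)^p * real_of_int (stirling1s p r) = (-1)^r * real (stirling p r)"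
proof (cases "r \<le> p")
  case True
  then obtain d where p: "p = r + d" using le_Suc_ex by blast
  have dd: "(-1::real)^d * (-1)^d = 1" by (induct d) auto
  show ?thesis unfolding stirling1s_def p
    by (simp add: power_add)
next
  case False then show ?thesis by (simp add: stirling1s_def)
qed

lemma negLL_pow: "((-LL)^r)$p = (-1)^r * (LL^r)$p"
  by (cases "even r") (simp_all add: power_minus_odd)

lemma H_nth: "(GG * LL)$k = (\<Sum>i=1..k. 1 / real i)"
proof -
  have "(GG * LL)$k = (LL * GG)$k" by (simp add: mult.commute)
  also have "\<dots> = (\<Sum>i=0..k. LL$i)" by (simp add: fps_mult_nth)
  also have "\<dots> = (\<Sum>i=1..k. 1 / real i)" by (simp add: sum.atLeast_Suc_atMost LL_nth)
  finally show ?thesis .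
qed

lemma mh: "(GG * LL^j)$k = mhn k j"
  using A_eq[of j] by (metis fps_nth_Abs_fps)

lemma inner: "(Sc (GG*LL^j) * (-LL)^r)$n = (\<Sum>k=0..n. mhn k j * (-1)^(n-k) * 2^k * fact r / fact (n-k)
      * real_of_int (stirling1s (n-k) r))"
proof -
  have "(Sc (GG*LL^j) * (-LL)^r)$n = (\<Sum>k=0..n. (2^k * mhn k j) * ((-1)^r * (fact r * real (stirling (n-k) r) / fact (n-k))))"
    by (simp add: fps_mult_nth[of "Sc _"] negLL_pow LL_pow mh)
  also have "\<dots> = (\<Sum>k=0..n. mhn k j * (-1)^(n-k) * 2^k * fact r / fact (n-k)
      * real_of_int (stirling1s (n-k) r))"
  proof (rule sum.cong[OF refl])
    fix k
    have "mhn k j * (-1)^(n-k) * 2^k * fact r / fact (n-k) * real_of_int (stirling1s (n-k) r)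
        = (mhn k j * 2^k * fact r / fact (n-k)) * ((-1)^(n-k) * real_of_int (stirling1s (n-k) r))"
      by (simp add: mult_ac)
    also have "\<dots> = (mhn k j * 2^k * fact r / fact (n-k)) * ((-1)^r * real (stirling (n-k) r))"
      by (simp only: sign_st)
    finally show "(2^k * mhn k j) * ((-1)^r * (fact r * real (stirling (n-k) r) / fact (n-k))) =
        mhn k j * (-1)^(n-k) * 2^k * fact r / fact (n-k) * real_of_int (stirling1s (n-k) r)"
      by (simp add: mult_ac) metis
  qed
  finally show ?thesis .
qed

lemma T_main: "GG * ((GG * f) oo WW) = Sc GG * (f oo WW)"
  by (simp add: fps_compose_mult_distrib GG_comp[symmetric] mult.assoc)

theorem corollary3:
  fixes n m :: nat
  shows "((\<Sum>k=0..n. real (n choose k) * mhn k m) =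
           (\<Sum>j=0..m. real (m choose j) *
              (\<Sum>k=0..n. mhn k j * (-1) ^ (n - k) * 2 ^ k * fact (m - j) / fact (n - k)
                           * real_of_int (stirling1s (n - k) (m - j))))) \<and>
         ((\<Sum>k=0..n. real (n choose k) * (\<Sum>i=1..k. 1 / real i)) =
           2 ^ n * ((\<Sum>i=1..n. 1 / real i) - (\<Sum>k=1..n. 1 / (2 ^ k * real k))))"
proof
  have "(\<Sum>k=0..n. real (n choose k) * mhn k m) = (GG * ((GG * LL^m) oo WW))$n"
    by (simp add: T_nth mh)
  also have "GG * ((GG * LL^m) oo WW) = Sc GG * (Sc LL + (-LL))^m"
    by (simp add: T_main fps_compose_power[symmetric] LL_comp)
  also have "\<dots> = Sc GG * (\<Sum>j\<le>m. of_nat (m choose j) * (Sc LL)^j * (-LL)^(m-j))"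
    by (simp only: binomial_ring)
  also have "\<dots> = (\<Sum>j\<le>m. of_nat (m choose j) * (Sc (GG * LL^j) * (-LL)^(m-j)))"
    by (simp add: sum_distrib_left Sc_mult Sc_power mult_ac)
  also have "(\<dots>)$n = (\<Sum>j=0..m. real (m choose j) * (Sc (GG * LL^j) * (-LL)^(m-j))$n)"
    by (simp add: fps_sum_nth atMost_atLeast0)
  also have "\<dots> = (\<Sum>j=0..m. real (m choose j) *
              (\<Sum>k=0..n. mhn k j * (-1) ^ (n - k) * 2 ^ k * fact (m - j) / fact (n - k)
                           * real_of_int (stirling1s (n - k) (m - j))))"
    by (simp only: inner)
  finally show "(\<Sum>k=0..n. real (n choose k) * mhn k m) =
           (\<Sum>j=0..m. real (m choose j) *
              (\<Sum>k=0..n. mhn k j * (-1) ^ (n - k) * 2 ^ k * fact (m - j) / fact (n - k)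
                           * real_of_int (stirling1s (n - k) (m - j))))" .
next
  have "(\<Sum>k=0..n. real (n choose k) * (\<Sum>i=1..k. 1 / real i)) = (GG * ((GG * LL) oo WW))$n"
    by (simp add: T_nth H_nth)
  also have "GG * ((GG * LL) oo WW) = Sc (GG * LL) - LL * Sc GG"
    by (simp add: T_main LL_comp Sc_mult algebra_simps)
  also have "(\<dots>)$n = 2^n * (\<Sum>i=1..n. 1 / real i) - (\<Sum>k=0..n. LL$k * 2^(n-k))"
    by (simp add: H_nth fps_mult_nth[of LL])
  also have "(\<Sum>k=0..n. LL$k * 2^(n-k)) = 2^n * (\<Sum>k=1..n. 1 / (2 ^ k * real k))"
    by (simp add: sum.atLeast_Suc_atMost LL_nth sum_distrib_left power_diff) (simp add: mult.commute)
  finally show "(\<Sum>k=0..n. real (n choose k) * (\<Sum>i=1..k. 1 / real i)) =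
           2 ^ n * ((\<Sum>i=1..n. 1 / real i) - (\<Sum>k=1..n. 1 / (2 ^ k * real k)))"
    by (simp add: algebra_simps)
qed

end
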